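(* In the MDP fixed-point setting below with $\delta=1$, let $\mathcal{Z}_i=\{e^1,\dots,e^M\}$ (standard basis vectors of $\mathbb{R}^M$) for every $i$ and $k_i(z_i)=-C-\sum_j z_{ij}|i-j|$ with $C>0$. Then (H4) holds. Moreover, suppose there is a state $r$ with $1\in\mathcal{D}_r$ and $c_r(w_r)<-C$ for all $w_r\in\mathcal{W}_r$. Then, starting policy iteration from $v^0=0$, every admissible choice $P^1=(w^1,z^1,\psi^1)$ in the first step satisfies $z^1_r=e^r$ and $\psi^1_r=1$, row $r$ of $A(P^1)$ is identically zero, and hence $A(P^1)$ is singular (so $v^1$ is undefined).
   Context: MDP fixed-point setting: $\rho>0$; $\mathcal{P}=\prod_i(\mathcal{W}_i\times\mathcal{Z}_i\times\mathcal{D}_i)$ with $\mathcal{D}_i$ nonempty subsets of $\{0,1\}$ and $\mathcal{W}_i,\mathcal{Z}_i$ nonempty sets of probability vectors in $\mathbb{R}^M$; $c_i:\mathcal{W}_i\to\mathbb{R}$, $k_i:\mathcal{Z}_i\to\mathbb{R}$. For $P=(w,z,\psi)$: $[L(w)]_{ij}=w_{ij}/(1+\rho)$, $[B(z)]_{ij}=z_{ij}$, $[c(w)]_i=c_i(w_i)$, $[k(z)]_i=k_i(z_i)$, $\Psi=\operatorname{diag}(\psi)$, $A(P)=(I-\Psi)(I-L(w))+\delta\Psi(I-B(z))$, $b(P)=(I-\Psi)c(w)+\delta\Psi k(z)$. Order/suprema componentwise; $\mathbb{B}x=\sup_{z}\{B(z)x+k(z)\}$. Policy iteration: given $v^0$,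 for $\ell\ge1$ choose $P^\ell$ with $-A(P^\ell)v^{\ell-1}+b(P^\ell)=\sup_P\{-A(P)v^{\ell-1}+b(P)\}$ and solve $A(P^\ell)v^\ell=b(P^\ell)$. (H4): for each solution $v$ of $\sup_P\{-A(P)v+b(P)\}=0$ and each $i$ there exist integers $0\le n(i)<m(i)$ with $[\mathbb{B}^{m(i)}v]_i<[\mathbb{B}^{n(i)}v]_i$. *)

theory Defs
  imports Main "HOL-Library.Extended_Real" "Jordan_Normal_Form.Determinant"
begin

(* States are indexed 0..M-1 (the paper uses 1..M; the distances |i-j| are shift invariant).
   Vectors are nat => real, matrices nat => nat => real; only indices < M matter. *)

definition prob_vec :: "nat \<Rightarrow> (nat \<Rightarrow> real) \<Rightarrow> bool" where
  "prob_vec M p \<longleftrightarrow> (\<forall>j<M. 0 \<le> p j) \<and> (\<Sum>j<M. p j) = 1"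

definition basis_vec :: "nat \<Rightarrow> nat \<Rightarrow> real" where
  "basis_vec j = (\<lambda>l. if l = j then 1 else 0)"

type_synonym policy = "(nat \<Rightarrow> nat \<Rightarrow> real) \<times> (nat \<Rightarrow> nat \<Rightarrow> real) \<times> (nat \<Rightarrow> real)"

definition policies ::
  "nat \<Rightarrow> (nat \<Rightarrow> (nat \<Rightarrow> real) set) \<Rightarrow> (nat \<Rightarrow> (nat \<Rightarrow> real) set) \<Rightarrow> (nat \<Rightarrow> real set) \<Rightarrow> policy set" where
  "policies M W Z D = {(w, z, \<psi>). \<forall>i<M. w i \<in> W i \<and> z i \<in> Z i \<and> \<psi> i \<in> D i}"

definition Amat :: "real \<Rightarrow> real \<Rightarrow> policy \<Rightarrow> nat \<Rightarrow> nat \<Rightarrow> real" where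
  "Amat \<rho> \<delta> P i j = (case P of (w, z, \<psi>) \<Rightarrow>
     (1 - \<psi> i) * ((if i = j then 1 else 0) - w i j / (1 + \<rho>))
     + \<delta> * \<psi> i * ((if i = j then 1 else 0) - z i j))"

definition bvec :: "(nat \<Rightarrow> (nat \<Rightarrow> real) \<Rightarrow> real) \<Rightarrow> (nat \<Rightarrow> (nat \<Rightarrow> real) \<Rightarrow> real)
    \<Rightarrow> real \<Rightarrow> policy \<Rightarrow> nat \<Rightarrow> real" where
  "bvec c k \<delta> P i = (case P of (w, z, \<psi>) \<Rightarrow> (1 - \<psi> i) * c i (w i) + \<delta> * \<psi> i * k i (z i))"

definition Fval :: "nat \<Rightarrow> real \<Rightarrow> real \<Rightarrow> (nat \<Rightarrow> (nat \<Rightarrow> real) \<Rightarrow> real)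
    \<Rightarrow> (nat \<Rightarrow> (nat \<Rightarrow> real) \<Rightarrow> real) \<Rightarrow> policy \<Rightarrow> (nat \<Rightarrow> real) \<Rightarrow> nat \<Rightarrow> real" where
  "Fval M \<rho> \<delta> c k P v i = - (\<Sum>j<M. Amat \<rho> \<delta> P i j * v j) + bvec c k \<delta> P i"

definition Bop :: "nat \<Rightarrow> (nat \<Rightarrow> (nat \<Rightarrow> real) set) \<Rightarrow> (nat \<Rightarrow> (nat \<Rightarrow> real) \<Rightarrow> real)
    \<Rightarrow> (nat \<Rightarrow> real) \<Rightarrow> nat \<Rightarrow> real" where
  "Bop M Z k x i = (SUP zi\<in>Z i. (\<Sum>j<M. zi j * x j) + k i zi)"

definition H4 :: "nat \<Rightarrow> real \<Rightarrow> real \<Rightarrow> (nat \<Rightarrow> (nat \<Rightarrow> real) set) \<Rightarrow> (nat \<Rightarrow> (nat \<Rightarrow> real) set)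
    \<Rightarrow> (nat \<Rightarrow> real set) \<Rightarrow> (nat \<Rightarrow> (nat \<Rightarrow> real) \<Rightarrow> real) \<Rightarrow> (nat \<Rightarrow> (nat \<Rightarrow> real) \<Rightarrow> real) \<Rightarrow> bool" where
  "H4 M \<rho> \<delta> W Z D c k \<longleftrightarrow>
     (\<forall>v. (\<forall>i<M. (SUP P\<in>policies M W Z D. ereal (Fval M \<rho> \<delta> c k P v i)) = 0) \<longrightarrow>
        (\<forall>i<M. \<exists>n m. n < m \<and> (Bop M Z k ^^ m) v i < (Bop M Z k ^^ n) v i))"

definition pi_choice :: "nat \<Rightarrow> real \<Rightarrow> real \<Rightarrow> (nat \<Rightarrow> (nat \<Rightarrow> real) set) \<Rightarrow> (nat \<Rightarrow> (nat \<Rightarrow> real) set)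
    \<Rightarrow> (nat \<Rightarrow> real set) \<Rightarrow> (nat \<Rightarrow> (nat \<Rightarrow> real) \<Rightarrow> real) \<Rightarrow> (nat \<Rightarrow> (nat \<Rightarrow> real) \<Rightarrow> real)
    \<Rightarrow> (nat \<Rightarrow> real) \<Rightarrow> policy \<Rightarrow> bool" where
  "pi_choice M \<rho> \<delta> W Z D c k v P \<longleftrightarrow> P \<in> policies M W Z D \<and>
     (\<forall>P'\<in>policies M W Z D. \<forall>i<M. Fval M \<rho> \<delta> c k P' v i \<le> Fval M \<rho> \<delta> c k P v i)"

definition Amatrix :: "nat \<Rightarrow> real \<Rightarrow> real \<Rightarrow> policy \<Rightarrow> real mat" where
  "Amatrix M \<rho> \<delta> P = mat M M (\<lambda>(i, j). Amat \<rho> \<delta> P i j)"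

end

theory Submission
  imports Defs
begin

lemma det_zero_row_gen:
  fixes A :: "real mat"
  assumes "A \<in> carrier_mat n n" "r < n" "\<forall>j<n. A $$ (r, j) = 0"
  shows "det A = 0"
proof -
  {
    fix p assume p: "p permutes {0 ..< n}"
    have "p r < n" using p assms(2) by (meson atLeastLessThan_iff permutes_in_image zero_le)
    hence "(\<Prod>i\<in>{0..<n}. A $$ (i, p i)) = 0"
      by (intro prod_zero[OF _ bexI[of _ r]]) (use assms in auto)
  }
  hence "\<And>p. p \<in> {p. p permutes {0..<n}} \<Longrightarrow> of_int (sign p) * (\<Prod>i\<in>{0..<n}. A $$ (i, p i)) = (0::real)"
    by simp
  hence "(\<Sum>p\<in>{p. p permutes {0..<n}}. of_int (sign p) * (\<Prod>i\<in>{0..<n}. A $$ (i, p i))) = (0::real)"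
    by (intro sum.neutral) blast
  thus ?thesis using assms(1) unfolding det_def by simp
qed

lemma sum_basis:
  fixes f :: "nat \<Rightarrow> real"
  assumes "j < M"
  shows "(\<Sum>l<M. basis_vec j l * f l) = f j"
proof -
  have "(\<Sum>l<M. basis_vec j l * f l) = (\<Sum>l<M. if l = j then f l else 0)"
    by (rule sum.cong) (auto simp: basis_vec_def)
  also have "\<dots> = f j" using assms by (simp add: sum.delta')
  finally show ?thesis .
qed

lemma Bop_bound:
  fixes C :: real
  assumes "Z = (\<lambda>i. {basis_vec j | j. j < M})"
    and "k = (\<lambda>i zi. - C - (\<Sum>j<M. zi j * \<bar>real i - real j\<bar>))"
    and "i < M" and "\<forall>j<M. x j \<le> b"
  shows "Bop M Z k x i \<le> b - C"
proof -
  have ne: "Z i \<noteq> {}" using assms(1,3) by auto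
  show ?thesis unfolding Bop_def
  proof (rule cSUP_least[OF ne])
    fix zi assume "zi \<in> Z i"
    then obtain j where j: "j < M" "zi = basis_vec j" using assms(1) by auto
    have s1: "(\<Sum>l<M. zi l * x l) = x j"
      using j sum_basis[of j M] by simp
    have s2: "(\<Sum>l<M. zi l * \<bar>real i - real l\<bar>) = \<bar>real i - real j\<bar>"
      using j sum_basis[of j M] by simp
    show "(\<Sum>l<M. zi l * x l) + k i zi \<le> b - C"
      using s1 s2 assms(2,4) j by auto
  qed
qed

theorem mainTheorem9:
  fixes M r :: nat and \<rho> C :: real
    and W :: "nat \<Rightarrow> (nat \<Rightarrow> real) set" and D :: "nat \<Rightarrow> real set"
    and c :: "nat \<Rightarrow> (nat \<Rightarrow> real) \<Rightarrow> real"
    and Z :: "nat \<Rightarrow> (nat \<Rightarrow> real) set" and k :: "nat \<Rightarrow> (nat \<Rightarrow> real) \<Rightarrow> real"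
  assumes "\<rho> > 0" and "C > 0"
    and "\<forall>i<M. W i \<noteq> {} \<and> (\<forall>p\<in>W i. prob_vec M p)"
    and "\<forall>i<M. D i \<noteq> {} \<and> D i \<subseteq> {0, 1}"
    and "Z = (\<lambda>i. {basis_vec j | j. j < M})"
    and "k = (\<lambda>i zi. - C - (\<Sum>j<M. zi j * \<bar>real i - real j\<bar>))"
  shows "H4 M \<rho> 1 W Z D c k \<and>
    ((r < M \<and> 1 \<in> D r \<and> (\<forall>wr\<in>W r. c r wr < - C)) \<longrightarrow>
      (\<forall>w z \<psi>. pi_choice M \<rho> 1 W Z D c k (\<lambda>_. 0) (w, z, \<psi>) \<longrightarrow>
         z r = basis_vec r \<and> \<psi> r = 1 \<and> (\<forall>j<M. Amat \<rho> 1 (w, z, \<psi>) r j = 0) \<and>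
         det (Amatrix M \<rho> 1 (w, z, \<psi>)) = 0))"
proof (intro conjI impI allI)
  show "H4 M \<rho> 1 W Z D c k"
    unfolding H4_def
  proof (intro allI impI)
    fix v :: "nat \<Rightarrow> real" and i assume "i < M"
    define mv where "mv = Max (v ` {..<M})"
    have vle: "\<forall>j<M. v j \<le> mv" unfolding mv_def by auto
    have bnd: "\<forall>j<M. (Bop M Z k ^^ n) v j \<le> mv - real n * C" for n
    proof (induction n)
      case 0 then show ?case using vle by simp
    next
      case (Suc n)
      show ?case
      proof (intro allI impI)
        fix j assume "j < M"
        have "Bop M Z k ((Bop M Z k ^^ n) v) j \<le> (mv - real n * C) - C"
          by (rule Bop_bound[OF assms(5,6) \<open>j < M\<close> Suc]) 
        thus "(Bop M Z k ^^ Suc n) v j \<le> mv - real (Suc n) * C"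
          by (simp add: algebra_simps)
      qed
    qed
    obtain n :: nat where n: "mv - v i < real n * C"
      using reals_Archimedean3[OF assms(2)] by blast
    have "n > 0" using n vle \<open>i < M\<close> by (cases n) auto
    moreover have "(Bop M Z k ^^ n) v i < (Bop M Z k ^^ 0) v i"
      using bnd[of n] \<open>i < M\<close> n by fastforce
    ultimately show "\<exists>n m. n < m \<and> (Bop M Z k ^^ m) v i < (Bop M Z k ^^ n) v i"
      by blast
  qed
next
  fix w z \<psi>
  assume H: "r < M \<and> 1 \<in> D r \<and> (\<forall>wr\<in>W r. c r wr < - C)"
    and pc: "pi_choice M \<rho> 1 W Z D c k (\<lambda>_. 0) (w, z, \<psi>)"
  have rM: "r < M" and D1: "1 \<in> D r" and cr: "\<forall>wr\<in>W r. c r wr < - C" using H by auto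
  have Pin: "(w, z, \<psi>) \<in> policies M W Z D" and opt: "\<forall>P'\<in>policies M W Z D. \<forall>i<M.
      Fval M \<rho> 1 c k P' (\<lambda>_. 0) i \<le> Fval M \<rho> 1 c k (w, z, \<psi>) (\<lambda>_. 0) i"
    using pc unfolding pi_choice_def by auto
  have pol: "\<forall>i<M. w i \<in> W i \<and> z i \<in> Z i \<and> \<psi> i \<in> D i" using Pin unfolding policies_def by auto
  define P' where "P' = (w, z(r := basis_vec r), \<psi>(r := 1))"
  have P'in: "P' \<in> policies M W Z D"
    unfolding P'_def policies_def using pol rM D1 assms(5) by auto
  have Fv: "Fval M \<rho> 1 c k (w', z', \<psi>') (\<lambda>_. 0) i = (1 - \<psi>' i) * c i (w' i) + \<psi>' i * k i (z' i)"
    for w' z' \<psi>' i unfolding Fval_def bvec_def by simp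
  have kr: "k r (basis_vec r) = - C"
    using rM sum_basis[of r M] by (simp add: assms(6))
  have le: "- C \<le> (1 - \<psi> r) * c r (w r) + \<psi> r * k r (z r)"
    using opt P'in rM Fv[of "w" "z(r := basis_vec r)" "\<psi>(r := 1)" r] Fv[of w z \<psi> r] kr
    unfolding P'_def by fastforce
  have wr: "c r (w r) < - C" using cr pol rM by auto
  have psi01: "\<psi> r = 0 \<or> \<psi> r = 1" using pol assms(4) rM by auto
  obtain j where j: "j < M" "z r = basis_vec j" using pol rM assms(5) by auto
  have kz: "k r (z r) = - C - \<bar>real r - real j\<bar>"
    using j sum_basis[of j M] by (simp add: assms(6))
  show psi1: "\<psi> r = 1" using psi01 le wr by auto
  hence "- C \<le> - C - \<bar>real r - real j\<bar>" using le kz by simp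
  hence "j = r" by simp
  thus zr: "z r = basis_vec r" using j by simp
  show row: "\<And>j. j < M \<Longrightarrow> Amat \<rho> 1 (w, z, \<psi>) r j = 0"
    using psi1 zr by (simp add: Amat_def basis_vec_def)
  show "det (Amatrix M \<rho> 1 (w, z, \<psi>)) = 0"
    by (rule det_zero_row_gen[OF _ rM]) (use row rM in \<open>auto simp: Amatrix_def index_mat\<close>)
qed

end
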